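(* Let $k\ge 2$ and $n=2k+1$. The distance characteristic polynomial of the friendship graph $F^{k}_{n}$ is $$P_D(\lambda)=(\lambda+1)^{n-k-1}(\lambda+3)^{k-1}\bigl[\lambda^{2}-(4k-3)\lambda-2k\bigr].$$ If $\lambda_1\ge\lambda_2\ge\cdots\ge\lambda_n$ is the distance spectrum of $F^{k}_{n}$, then $-1<\lambda_2<-\frac12$, $\lambda_3=-1$ and $\lambda_n=-3$.
   Context: For a connected graph $G$, the distance matrix $D(G)$ has as $(i,j)$-entry the distance between the $i$-th and $j$-th vertices; $P_D(\lambda)=\det(\lambda I-D(G))$ and the distance spectrum consists of the eigenvalues of $D(G)$. The friendship graph $F^{k}_{n}$ ($n=2k+1$) is obtained by taking $k$ copies of $C_3$ and identifying one vertex of each copy into a single common vertex. *)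

theory Defs
  imports "Jordan_Normal_Form.Char_Poly"
begin

definition is_walk :: "(nat \<Rightarrow> nat \<Rightarrow> bool) \<Rightarrow> nat set \<Rightarrow> nat list \<Rightarrow> nat \<Rightarrow> nat \<Rightarrow> bool" where
  "is_walk adj V p u v \<longleftrightarrow> p \<noteq> [] \<and> hd p = u \<and> last p = v \<and> set p \<subseteq> V \<and>
     (\<forall>i. Suc i < length p \<longrightarrow> adj (p ! i) (p ! Suc i))"

definition graph_dist :: "(nat \<Rightarrow> nat \<Rightarrow> bool) \<Rightarrow> nat set \<Rightarrow> nat \<Rightarrow> nat \<Rightarrow> nat" where
  "graph_dist adj V u v = (LEAST m. \<exists>p. is_walk adj V p u v \<and> length p = Suc m)"

definition distance_matrix :: "(nat \<Rightarrow> nat \<Rightarrow> bool) \<Rightarrow> nat \<Rightarrow> real mat" where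
  "distance_matrix adj n = mat n n (\<lambda>(i, j). real (graph_dist adj {0..<n} i j))"

text \<open>Friendship graph F^k_n, n = 2k+1: vertex 0 is the common vertex, and for
i < k the triangle i consists of 0, 2i+1, 2i+2.\<close>
definition friendship_adj :: "nat \<Rightarrow> nat \<Rightarrow> nat \<Rightarrow> bool" where
  "friendship_adj k u v \<longleftrightarrow> u < 2*k+1 \<and> v < 2*k+1 \<and> u \<noteq> v \<and>
     (u = 0 \<or> v = 0 \<or> (u + 1) div 2 = (v + 1) div 2)"

end

theory Submission
  imports Defs
begin


lemma walk_single: "u \<in> V \<Longrightarrow> is_walk adj V [u] u u"
  by (simp add: is_walk_def)

lemma walk_len1: "is_walk adj V p u v \<Longrightarrow> length p = Suc 0 \<Longrightarrow> u = v"
  by (cases p) (auto simp: is_walk_def)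

lemma walk_len2: "is_walk adj V p u v \<Longrightarrow> length p = Suc (Suc 0) \<Longrightarrow> adj u v"
proof -
  assume w: "is_walk adj V p u v" and l: "length p = Suc (Suc 0)"
  then obtain a b where p: "p = [a,b]"
    by (metis length_0_conv length_Suc_conv)
  with w show ?thesis unfolding is_walk_def by (auto dest: spec[of _ 0])
qed

lemma dist_eq0: "u \<in> V \<Longrightarrow> graph_dist adj V u u = 0"
  unfolding graph_dist_def
  by (rule Least_equality) (auto intro: walk_single)

lemma dist_eq1: assumes "u \<in> V" "v \<in> V" "u \<noteq> v" "adj u v"
  shows "graph_dist adj V u v = 1"
  unfolding graph_dist_def
proof (rule Least_equality)
  show "\<exists>p. is_walk adj V p u v \<and> length p = Suc 1"
    by (rule exI[of _ "[u,v]"]) (use assms in \<open>auto simp: is_walk_def less_Suc_eq\<close>)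
  fix m assume "\<exists>p. is_walk adj V p u v \<and> length p = Suc m"
  then obtain p where "is_walk adj V p u v" "length p = Suc m" by auto
  then show "1 \<le> m" using walk_len1 assms by (cases m) auto
qed

lemma dist_eq2: assumes "u \<in> V" "v \<in> V" "w \<in> V" "u \<noteq> v" "\<not> adj u v" "adj u w" "adj w v"
  shows "graph_dist adj V u v = 2"
  unfolding graph_dist_def
proof (rule Least_equality)
  show "\<exists>p. is_walk adj V p u v \<and> length p = Suc 2"
    by (rule exI[of _ "[u,w,v]"]) (use assms in \<open>auto simp: is_walk_def less_Suc_eq nth_Cons'\<close>)
  fix m assume "\<exists>p. is_walk adj V p u v \<and> length p = Suc m"
  then obtain p where "is_walk adj V p u v" "length p = Suc m" by auto
  then have w: "is_walk adj V p u v" "length p = Suc m" by auto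
  show "2 \<le> m"
  proof (rule ccontr)
    assume "\<not> 2 \<le> m" then have "m = 0 \<or> m = 1" by auto
    then show False using walk_len1[OF w(1)] walk_len2[OF w(1)] w(2) assms by auto
  qed
qed

definition pt :: "nat \<Rightarrow> nat" where "pt r = (if odd r then r + 1 else r - 1)"

definition dl :: "nat \<Rightarrow> nat \<Rightarrow> real" where "dl a b = (if a = b then 1 else 0)"

lemma adj_iff: "u \<ge> 1 \<Longrightarrow> v \<ge> 1 \<Longrightarrow> u \<noteq> v \<Longrightarrow> ((u+1) div 2 = (v+1) div 2) = (v = pt u)"
proof (cases "odd u")
  case True
  then obtain a where "u = 2*a+1" by (auto elim: oddE)
  then show "u \<ge> 1 \<Longrightarrow> v \<ge> 1 \<Longrightarrow> u \<noteq> v \<Longrightarrow> ?thesis" unfolding pt_def by auto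
next
  case False
  then obtain a where "u = 2*a" by (auto elim: evenE)
  then show "u \<ge> 1 \<Longrightarrow> v \<ge> 1 \<Longrightarrow> u \<noteq> v \<Longrightarrow> ?thesis" unfolding pt_def by auto
qed

lemma pt_pos: "r \<ge> 1 \<Longrightarrow> pt r \<ge> 1" unfolding pt_def by auto
lemma pt_ne: "r \<ge> 1 \<Longrightarrow> pt r \<noteq> r" unfolding pt_def by auto

lemma D_entry:
  assumes "n = 2*k+1" "k \<ge> 1" "r < n" "c < n"
  shows "distance_matrix (friendship_adj k) n $$ (r,c) =
     (if r = c then 0 else if r = 0 \<or> c = 0 then 1 else if c = pt r then 1 else 2)"
proof -
  have "distance_matrix (friendship_adj k) n $$ (r,c) = real (graph_dist (friendship_adj k) {0..<n} r c)"
    using assms by (simp add: distance_matrix_def)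
  also have "\<dots> = (if r = c then 0 else if r = 0 \<or> c = 0 then 1 else if c = pt r then 1 else 2)"
  proof (cases "r = c")
    case True then show ?thesis using assms by (simp add: dist_eq0)
  next
    case False
    show ?thesis
    proof (cases "r = 0 \<or> c = 0 \<or> c = pt r")
      case True
      have "friendship_adj k r c" using True False assms adj_iff[of r c] pt_pos[of r]
        unfolding friendship_adj_def by auto
      then show ?thesis using True False assms by (auto simp: dist_eq1)
    next
      case F: False
      have "\<not> friendship_adj k r c" using F False assms adj_iff[of r c]
        unfolding friendship_adj_def by auto
      moreover have "friendship_adj k r 0" "friendship_adj k 0 c"
        using F assms unfolding friendship_adj_def by auto
      ultimately have "graph_dist (friendship_adj k) {0..<n} r c = 2"
        by (intro dist_eq2[of _ _ _ 0]) (use assms False in auto)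
      then show ?thesis using F False by simp
    qed
  qed
  finally show ?thesis .
qed



definition Df :: "nat \<Rightarrow> nat \<Rightarrow> real" where
  "Df r c = (if r = c then 0 else if r = 0 \<or> c = 0 then 1 else if c = pt r then 1 else 2)"

lemma sum_dl1[simp]: "finite A \<Longrightarrow> (\<Sum>l\<in>A. dl l a * f l) = (if a \<in> A then f a else 0)"
proof -
  assume "finite A"
  have "(\<Sum>l\<in>A. dl l a * f l) = (\<Sum>l\<in>A. if l = a then f l else 0)" by (rule sum.cong) (auto simp: dl_def)
  then show ?thesis using \<open>finite A\<close> by simp
qed
lemma sum_dl2[simp]: "finite A \<Longrightarrow> (\<Sum>l\<in>A. f l * dl l a) = (if a \<in> A then f a else 0)"
  using sum_dl1[of A a f] by (simp add: mult.commute)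
lemma sum_dl0[simp]: "finite A \<Longrightarrow> (\<Sum>l\<in>A. dl l a) = (if a \<in> A then 1 else 0)"
  unfolding dl_def by simp

lemma pt_lt: "n = 2*k+1 \<Longrightarrow> r \<ge> 1 \<Longrightarrow> r < n \<Longrightarrow> pt r < n"
  unfolding pt_def by presburger

lemma D_row:
  assumes "n = 2*k+1" "r \<ge> 1" "r < n"
  shows "(\<Sum>l\<in>{0..<n}. Df r l * y l) = y 0 + 2 * (\<Sum>l\<in>{0..<n}. y l) - 2 * y 0 - 2 * y r - y (pt r)"
proof -
  have pr: "pt r < n" "pt r \<noteq> r" "pt r \<noteq> 0" using pt_lt[OF assms] pt_ne[of r] pt_pos[of r] assms by auto
  have "(\<Sum>l\<in>{0..<n}. Df r l * y l) = (\<Sum>l\<in>{0..<n}. dl l 0 * y l + 2 * y l - 2 * (dl l 0 * y l)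
        - 2 * (dl l r * y l) - dl l (pt r) * y l)"
    by (rule sum.cong) (use assms pr in \<open>auto simp: Df_def dl_def\<close>)
  also have "\<dots> = y 0 + 2 * (\<Sum>l\<in>{0..<n}. y l) - 2 * y 0 - 2 * y r - y (pt r)"
  proof -
    have m: "0 \<in> {0..<n}" "r \<in> {0..<n}" "pt r \<in> {0..<n}" using assms pr by auto
    show ?thesis
      by (simp only: sum.distrib sum_subtractf sum_distrib_left[symmetric] sum_dl1 finite_atLeastLessThan m if_True)
  qed
  finally show ?thesis .
qed

lemma D_row0:
  assumes "n = 2*k+1"
  shows "(\<Sum>l\<in>{0..<n}. Df 0 l * y l) = (\<Sum>l\<in>{0..<n}. y l) - y 0"
proof -
  have "(\<Sum>l\<in>{0..<n}. Df 0 l * y l) = (\<Sum>l\<in>{0..<n}. y l - dl l 0 * y l)"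
    by (rule sum.cong) (auto simp: Df_def dl_def)
  also have "\<dots> = (\<Sum>l\<in>{0..<n}. y l) - y 0"
  proof -
    have m: "0 \<in> {0..<n}" using assms by auto
    show ?thesis by (simp only: sum_subtractf sum_dl1 finite_atLeastLessThan m if_True)
  qed
  finally show ?thesis .
qed

definition Pf :: "nat \<Rightarrow> nat \<Rightarrow> nat \<Rightarrow> real" where
  "Pf k r c = (if c = 0 then dl r 0 else if c = 1 then 1 - dl r 0
     else if c < k+2 then dl r (2*(c-2)+1) - dl r (2*(c-2)+2)
     else dl r 1 + dl r 2 - dl r (2*(c-k-1)+1) - dl r (2*(c-k-1)+2))"

definition Bf :: "nat \<Rightarrow> nat \<Rightarrow> nat \<Rightarrow> real" where
  "Bf k l c = (if c = 0 then dl l 1 else if c = 1 then 2*real k*dl l 0 + (4*real k-3)*dl l 1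
     else if c < k+2 then - dl l c else -3 * dl l c)"

definition Qf :: "nat \<Rightarrow> nat \<Rightarrow> nat \<Rightarrow> real" where
  "Qf k r l = (if r = 0 then dl l 0 else if r = 1 then (1 - dl l 0)/(2*real k)
     else if r < k+2 then (dl l (2*(r-2)+1) - dl l (2*(r-2)+2))/2
     else (1 - dl l 0)/(2*real k) - (dl l (2*(r-k-1)+1) + dl l (2*(r-k-1)+2))/2)"

lemma pt_pt: "r \<ge> 1 \<Longrightarrow> pt (pt r) = r"
  unfolding pt_def by auto

lemma dl_pt: "r \<ge> 1 \<Longrightarrow> a \<ge> 1 \<Longrightarrow> dl (pt r) a = dl r (pt a)"
  unfolding dl_def using pt_pt[of r] pt_pt[of a] by metis

lemma dl_same[simp]: "dl a a = 1" unfolding dl_def by simp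
lemma dl_pt0: "r \<ge> 1 \<Longrightarrow> dl (pt r) 0 = 0" unfolding dl_def using pt_pos[of r] by auto

lemma pt_odd[simp]: "pt (2*m+1) = 2*m+2" unfolding pt_def by simp
lemma pt_even[simp]: "pt (2*m+2) = 2*m+1" unfolding pt_def by simp
lemma pt_odd'[simp]: "pt (Suc (2*m)) = Suc (Suc (2*m))" unfolding pt_def by simp
lemma pt_even'[simp]: "pt (Suc (Suc (2*m))) = Suc (2*m)" unfolding pt_def by simp
lemma pt_1'[simp]: "pt (Suc 0) = 2" unfolding pt_def by simp
lemma pt_1[simp]: "pt 1 = 2" and pt_2[simp]: "pt 2 = 1" unfolding pt_def by auto
lemma dl_0: "r \<ge> 1 \<Longrightarrow> dl r 0 = 0" unfolding dl_def by auto

lemma colsum: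
  assumes n: "n = 2*k+1" and k: "k \<ge> 1" and c: "c < n"
  shows "(\<Sum>l\<in>{0..<n}. Pf k l c) = (if c = 0 then 1 else if c = 1 then 2*real k else 0)"
proof -
  have fin: "finite {0..<n}" by simp
  have m0: "0 \<in> {0..<n}" "1 \<in> {0..<n}" "2 \<in> {0..<n}" using n k by auto
  consider "c = 0" | "c = 1" | "c \<ge> 2" "c < k+2" | "c \<ge> k+2" by linarith
  then show ?thesis
  proof cases
    case 1 then show ?thesis using m0 by (simp add: Pf_def)
  next
    case 2
    have "(\<Sum>l\<in>{0..<n}. Pf k l c) = real n - 1" using m0 2 by (simp add: Pf_def sum_subtractf)
    then show ?thesis using 2 n by simp
  next
    case 3
    have "2*(c-2)+1 \<in> {0..<n}" "2*(c-2)+2 \<in> {0..<n}" using 3 n by auto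
    then show ?thesis using 3 by (simp add: Pf_def sum_subtractf)
  next
    case 4
    have "2*(c-k-1)+1 \<in> {0..<n}" "2*(c-k-1)+2 \<in> {0..<n}" using 4 n c by auto
    then show ?thesis using 4 m0 by (simp add: Pf_def sum_subtractf sum.distrib)
  qed
qed

lemma PB_entry:
  assumes n: "n = 2*k+1" and k: "k \<ge> 1" and c: "c < n"
  shows "(\<Sum>l\<in>{0..<n}. Pf k r l * Bf k l c) = (if c = 0 then Pf k r 1 else if c = 1 then
     2*real k * Pf k r 0 + (4*real k-3) * Pf k r 1 else if c < k+2 then - Pf k r c else -3 * Pf k r c)"
proof -
  have m0: "0 \<in> {0..<n}" "1 \<in> {0..<n}" "c \<in> {0..<n}" using n k c by auto
  consider "c = 0" | "c = 1" | "c \<ge> 2" "c < k+2" | "c \<ge> k+2" by linarith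
  then show ?thesis
  proof cases
    case 1 then show ?thesis using m0 by (simp add: Bf_def)
  next
    case 2
    have "(\<Sum>l\<in>{0..<n}. Pf k r l * Bf k l c) = (\<Sum>l\<in>{0..<n}. 2*real k * (Pf k r l * dl l 0) + (4*real k-3) * (Pf k r l * dl l 1))"
      by (rule sum.cong) (use 2 in \<open>auto simp: Bf_def algebra_simps\<close>)
    also have "\<dots> = 2*real k * Pf k r 0 + (4*real k-3) * Pf k r 1"
      using m0 by (simp only: sum.distrib sum_distrib_left[symmetric] sum_dl2 finite_atLeastLessThan if_True)
    finally show ?thesis using 2 by simp
  next
    case 3
    have "(\<Sum>l\<in>{0..<n}. Pf k r l * Bf k l c) = (\<Sum>l\<in>{0..<n}. - (Pf k r l * dl l c))"
      by (rule sum.cong) (use 3 in \<open>auto simp: Bf_def algebra_simps\<close>)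
    also have "\<dots> = - Pf k r c"
      using m0 by (simp only: sum_negf sum_dl2 finite_atLeastLessThan if_True)
    finally show ?thesis using 3 by simp
  next
    case 4
    have "(\<Sum>l\<in>{0..<n}. Pf k r l * Bf k l c) = (\<Sum>l\<in>{0..<n}. -3 * (Pf k r l * dl l c))"
      by (rule sum.cong) (use 4 in \<open>auto simp: Bf_def algebra_simps\<close>)
    also have "\<dots> = -3 * Pf k r c"
      using m0 by (simp only: sum_distrib_left[symmetric] sum_dl2 finite_atLeastLessThan if_True)
    finally show ?thesis using 4 by simp
  qed
qed

lemma DP_entry:
  assumes n: "n = 2*k+1" and k: "k \<ge> 1" and c: "c < n" and r: "r < n"
  shows "(\<Sum>l\<in>{0..<n}. Df r l * Pf k l c) = (\<Sum>l\<in>{0..<n}. Pf k r l * Bf k l c)"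
proof (cases "r = 0")
  case True
  then show ?thesis using D_row0[OF n, of "\<lambda>l. Pf k l c"] PB_entry[OF n k c, of r] colsum[OF n k c]
    by (simp add: Pf_def dl_def)
next
  case False
  then have r1: "r \<ge> 1" by simp
  note D = D_row[OF n r1 r, of "\<lambda>l. Pf k l c"]
  consider "c = 0" | "c = 1" | "c \<ge> 2" "c < k+2" | "c \<ge> k+2" by linarith
  then show ?thesis
  proof cases
    case 1 then show ?thesis using D PB_entry[OF n k c, of r] colsum[OF n k c] r1
      by (simp add: Pf_def dl_0 dl_pt0)
  next
    case 2 then show ?thesis using D PB_entry[OF n k c, of r] colsum[OF n k c] r1
      by (simp add: Pf_def dl_0 dl_pt0)
  next
    case 3
    then obtain m where cm: "c = m + 2" by (metis add.commute le_Suc_ex)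
    have v: "Pf k 0 c = 0" using 3 by (auto simp: Pf_def cm dl_def)
    have v2: "Pf k r c = dl r (2*m+1) - dl r (2*m+2)"
         "Pf k (pt r) c = dl r (2*m+2) - dl r (2*m+1)"
      using 3 r1 by (auto simp: Pf_def dl_pt cm)
    show ?thesis unfolding D PB_entry[OF n k c, of r] colsum[OF n k c] using 3 v v2
      by (simp add: algebra_simps)
  next
    case 4
    then obtain m where cm: "c = m + k + 1" and m1: "m \<ge> 1"
      by (metis add.commute le_Suc_ex add.assoc one_add_one le_add2)
    have v: "Pf k 0 c = 0" using 4 by (auto simp: Pf_def cm dl_def)
    have v2: "Pf k r c = dl r 1 + dl r 2 - dl r (2*m+1) - dl r (2*m+2)"
         "Pf k (pt r) c = dl r 2 + dl r 1 - dl r (2*m+2) - dl r (2*m+1)"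
      using 4 r1 by (auto simp: Pf_def dl_pt cm)
    show ?thesis unfolding D PB_entry[OF n k c, of r] colsum[OF n k c] using 4 v v2
      by (simp add: algebra_simps)
  qed
qed

lemma QP_entry:
  assumes n: "n = 2*k+1" and k: "k \<ge> 1" and c: "c < n" and r: "r < n"
  shows "(\<Sum>l\<in>{0..<n}. Qf k r l * Pf k l c) = dl r c"
proof -
  note S = colsum[OF n k c]
  have fin: "finite {0..<n}" by simp
  have m0: "0 \<in> {0..<n}" using n by auto
  have kk: "real k \<noteq> 0" using k by simp
  consider "r = 0" | "r = 1" | "r \<ge> 2" "r < k+2" | "r \<ge> k+2" by linarith
  then show ?thesis
  proof cases
    case 1
    have "(\<Sum>l\<in>{0..<n}. Qf k r l * Pf k l c) = (\<Sum>l\<in>{0..<n}. dl l 0 * Pf k l c)"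
      by (rule sum.cong) (use 1 in \<open>auto simp: Qf_def\<close>)
    also have "\<dots> = Pf k 0 c" using m0 by simp
    finally show ?thesis using 1 by (auto simp: Pf_def dl_def)
  next
    case 2
    have "(\<Sum>l\<in>{0..<n}. Qf k r l * Pf k l c) = (\<Sum>l\<in>{0..<n}. (Pf k l c - dl l 0 * Pf k l c) / (2*real k))"
      by (rule sum.cong) (use 2 in \<open>auto simp: Qf_def algebra_simps\<close>)
    also have "\<dots> = ((\<Sum>l\<in>{0..<n}. Pf k l c) - Pf k 0 c) / (2*real k)"
      using m0 by (simp only: sum_divide_distrib[symmetric] sum_subtractf sum_dl1 fin if_True)
    also have "\<dots> = dl r c" unfolding S using 2 kk c n by (auto simp: Pf_def dl_def)
    finally show ?thesis .
  next
    case 3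
    then obtain m where rm: "r = m + 2" by (metis add.commute le_Suc_ex)
    have mem: "2*m+1 \<in> {0..<n}" "2*m+2 \<in> {0..<n}" using 3 rm n by auto
    have "(\<Sum>l\<in>{0..<n}. Qf k r l * Pf k l c) = (\<Sum>l\<in>{0..<n}. (dl l (2*m+1) * Pf k l c - dl l (2*m+2) * Pf k l c) / 2)"
      by (rule sum.cong) (use 3 rm in \<open>auto simp: Qf_def algebra_simps\<close>)
    also have "\<dots> = (Pf k (2*m+1) c - Pf k (2*m+2) c) / 2"
      using mem by (simp only: sum_divide_distrib[symmetric] sum_subtractf sum_dl1 fin if_True)
    also have "\<dots> = dl r c" using 3 rm c n by (auto simp: Pf_def dl_def) presburger+
    finally show ?thesis .
  next
    case 4
    then obtain m where rm: "r = m + k + 1" and m1: "m \<ge> 1"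
      by (metis add.commute le_Suc_ex add.assoc one_add_one le_add2)
    have mem: "2*m+1 \<in> {0..<n}" "2*m+2 \<in> {0..<n}" using 4 rm n r by auto
    have "(\<Sum>l\<in>{0..<n}. Qf k r l * Pf k l c) = (\<Sum>l\<in>{0..<n}. (Pf k l c - dl l 0 * Pf k l c) / (2*real k)
        - (dl l (2*m+1) * Pf k l c + dl l (2*m+2) * Pf k l c) / 2)"
      by (rule sum.cong) (use 4 rm in \<open>auto simp: Qf_def algebra_simps add_divide_distrib diff_divide_distrib\<close>)
    also have "\<dots> = ((\<Sum>l\<in>{0..<n}. Pf k l c) - Pf k 0 c) / (2*real k) - (Pf k (2*m+1) c + Pf k (2*m+2) c) / 2"
      using mem m0 by (simp only: sum_divide_distrib[symmetric] sum_subtractf sum.distrib sum_dl1 fin if_True)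
    also have "\<dots> = dl r c" unfolding S using 4 rm m1 kk c n r by (auto simp: Pf_def dl_def) presburger+
    finally show ?thesis .
  qed
qed

definition "Dm n = mat n n (\<lambda>(r,c). Df r c)"
definition "Pm k n = mat n n (\<lambda>(r,c). Pf k r c)"
definition "Qm k n = mat n n (\<lambda>(r,c). Qf k r c)"
definition "Bm k n = mat n n (\<lambda>(r,c). Bf k r c)"

lemma dist_mat: assumes n: "n = 2*k+1" and k: "k \<ge> 1"
  shows "distance_matrix (friendship_adj k) n = Dm n"
  by (rule eq_matI) (use D_entry[OF n k] in \<open>auto simp: Dm_def Df_def distance_matrix_def\<close>)

lemma DP_mat: assumes n: "n = 2*k+1" and k: "k \<ge> 1"
  shows "Dm n * Pm k n = Pm k n * Bm k n"
  by (rule eq_matI) (use DP_entry[OF n k] in \<open>auto simp: Dm_def Pm_def Bm_def scalar_prod_def\<close>)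

lemma QP_mat: assumes n: "n = 2*k+1" and k: "k \<ge> 1"
  shows "Qm k n * Pm k n = 1\<^sub>m n"
  by (rule eq_matI) (use QP_entry[OF n k] in \<open>auto simp: Qm_def Pm_def scalar_prod_def dl_def\<close>)

lemma char_D_B: assumes n: "n = 2*k+1" and k: "k \<ge> 1"
  shows "char_poly (Dm n) = char_poly (Bm k n)"
proof -
  have c: "Dm n \<in> carrier_mat n n" "Pm k n \<in> carrier_mat n n" "Qm k n \<in> carrier_mat n n" "Bm k n \<in> carrier_mat n n"
    by (auto simp: Dm_def Pm_def Qm_def Bm_def)
  have QP: "Qm k n * Pm k n = 1\<^sub>m n" by (rule QP_mat[OF n k])
  have PQ: "Pm k n * Qm k n = 1\<^sub>m n" by (rule mat_mult_left_right_inverse[OF c(3) c(2) QP])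
  have "Dm n = Dm n * (Pm k n * Qm k n)" using c PQ by simp
  also have "\<dots> = (Dm n * Pm k n) * Qm k n" using c by (simp add: assoc_mult_mat)
  also have "\<dots> = Pm k n * Bm k n * Qm k n" using DP_mat[OF n k] by simp
  finally have "Dm n = Pm k n * Bm k n * Qm k n" .
  then have "similar_mat_wit (Dm n) (Bm k n) (Pm k n) (Qm k n)"
    unfolding similar_mat_wit_def using c PQ QP by (auto simp: Dm_def Let_def)
  then have "similar_mat (Dm n) (Bm k n)" unfolding similar_mat_def by blast
  then show ?thesis by (rule char_poly_similar)
qed

lemma char_poly_four_block_zeros: fixes A1 :: "real mat" assumes A1: "A1 \<in> carrier_mat m m"
  and A2: "A2 \<in> carrier_mat m n" and A3: "A3 \<in> carrier_mat n n"
  shows "char_poly (four_block_mat A1 A2 (0\<^sub>m n m) A3) = char_poly A1 * char_poly A3"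
proof -
  let ?cm = "\<lambda> A. [:0, 1:] \<cdot>\<^sub>m 1\<^sub>m (dim_row A) +
         map_mat (\<lambda>a. [:- a:]) A"
  let ?B2 = "map_mat (\<lambda>a. [:- a:]) A2"
  have "char_poly (four_block_mat A1 A2 (0\<^sub>m n m) A3) = det (?cm (four_block_mat A1 A2 (0\<^sub>m n m) A3))"
    unfolding char_poly_defs using A1 A3 by simp
  also have "?cm (four_block_mat A1 A2 (0\<^sub>m n m) A3) = four_block_mat (?cm A1) ?B2 (0\<^sub>m n m) (?cm A3)"
    by (rule eq_matI, insert A1 A2 A3, auto simp: one_poly_def)
  also have "det \<dots> = det (?cm A1) * det (?cm A3)"
    by (rule det_four_block_mat_lower_left_zero[of _ m _ n], insert A1 A2 A3, auto)
  also have "\<dots> = char_poly A1 * char_poly A3" unfolding char_poly_defs ..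
  finally show ?thesis .
qed

definition "Cm k = mat 2 2 (\<lambda>(i,j). Bf k i j)"
definition "Tm k n = mat (n-2) (n-2) (\<lambda>(i,j). Bf k (i+2) (j+2))"

lemma B_block: assumes n: "n = 2*k+1" and k: "k \<ge> 1"
  shows "Bm k n = four_block_mat (Cm k) (0\<^sub>m 2 (n-2)) (0\<^sub>m (n-2) 2) (Tm k n)"
  by (rule eq_matI) (use n k in \<open>auto simp: Bm_def Cm_def Tm_def Bf_def dl_def\<close>)

lemma char_C: "char_poly (Cm k) = [: - 2 * real k, - (4 * real k - 3), 1 :]"
proof -
  define M where "M = char_poly_matrix (Cm k)"
  have M: "M \<in> carrier_mat 2 2" by (simp add: Cm_def M_def)
  have d: "det (mat_delete M i 0) = M $$ (if 0 < i then 0 else 1, 1)" for i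
  proof -
    have "mat_delete M i 0 \<in> carrier_mat 1 1" using mat_delete_carrier[OF M] by simp
    then show ?thesis by (simp add: det_single mat_delete_def) (use M in \<open>auto simp: M_def\<close>)
  qed
  have "char_poly (Cm k) = (\<Sum>i<2. M $$ (i, 0) * cofactor M i 0)"
    unfolding char_poly_def M_def[symmetric] by (rule laplace_expansion_column[OF M]) simp
  also have "\<dots> = M $$ (0,0) * M $$ (1,1) - M $$ (1,0) * M $$ (0,1)"
    by (simp add: cofactor_def d numeral_2_eq_2 lessThan_Suc)
  also have "\<dots> = [: - 2 * real k, - (4 * real k - 3), 1 :]"
    by (simp add: M_def char_poly_matrix_def Cm_def Bf_def dl_def)
  finally show ?thesis .
qed

lemma char_T: assumes n: "n = 2*k+1" and k: "k \<ge> 1"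
  shows "char_poly (Tm k n) = [:1,1:]^k * [:3,1:]^(k-1)"
proof -
  have T: "Tm k n \<in> carrier_mat (n-2) (n-2)" by (simp add: Tm_def)
  have ut: "upper_triangular (Tm k n)"
    unfolding upper_triangular_def by (auto simp: Tm_def Bf_def dl_def)
  have dg: "diag_mat (Tm k n) = replicate k (-1) @ replicate (k-1) (-3)"
    by (rule nth_equalityI) (use n k in \<open>auto simp: diag_mat_def Tm_def Bf_def dl_def nth_append\<close>)
  show ?thesis
    unfolding char_poly_upper_triangular[OF T ut] dg by simp
qed

lemma part1: assumes n: "n = 2*k+1" and k: "k \<ge> 1"
  shows "char_poly (distance_matrix (friendship_adj k) n) =
           [:1, 1:] ^ (n - k - 1) * [:3, 1:] ^ (k - 1) *
           [: - 2 * real k, - (4 * real k - 3), 1 :]"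
proof -
  have "char_poly (distance_matrix (friendship_adj k) n) = char_poly (Bm k n)"
    using dist_mat[OF n k] char_D_B[OF n k] by simp
  also have "\<dots> = char_poly (Cm k) * char_poly (Tm k n)"
    unfolding B_block[OF n k]
    by (rule char_poly_four_block_zeros) (auto simp: Cm_def Tm_def)
  also have "\<dots> = [:1, 1:] ^ (n - k - 1) * [:3, 1:] ^ (k - 1) * [: - 2 * real k, - (4 * real k - 3), 1 :]"
    unfolding char_C char_T[OF n k] using n by (simp add: ac_simps)
  finally show ?thesis .
qed

lemma order_lin: "order a [:-x, 1:] = (if a = x then 1 else 0)"
proof (cases "a = x")
  case True then show ?thesis using order_power_n_n[of a 1] by simp
next
  case False
  then have "poly [:-x, 1:] a \<noteq> 0" by simp
  then show ?thesis using False by (simp add: order_0I)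
qed

lemma prod_lin_nz: "(\<Prod>x\<leftarrow>xs. [:-x, 1::real:]) \<noteq> 0"
  by (auto simp: prod_list_zero_iff)

lemma order_prod_lin: "order a (\<Prod>x\<leftarrow>xs. [:-x, 1::real:]) = count (mset xs) a"
proof (induction xs)
  case Nil then show ?case by (simp add: order_0I)
next
  case (Cons x xs)
  have e: "(\<Prod>x\<leftarrow>x#xs. [:-x, 1:]) = [:-x,1::real:] * (\<Prod>x\<leftarrow>xs. [:-x,1:])" by simp
  have ne: "[:-x,1::real:] * (\<Prod>x\<leftarrow>xs. [:-x,1:]) \<noteq> 0" by (metis e prod_lin_nz)
  show ?case unfolding e order_mult[OF ne] Cons.IH order_lin by simp
qed

lemma sorted_wrt_repl: "R x x \<Longrightarrow> sorted_wrt R (replicate m x)"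
  by (induction m) auto

lemma sorted_desc_unique:
  fixes xs ys :: "real list"
  assumes "sorted_wrt (\<ge>) xs" "sorted_wrt (\<ge>) ys" "mset xs = mset ys"
  shows "xs = ys"
proof -
  have "sorted (rev xs)" "sorted (rev ys)" using assms(1,2) by (simp_all add: sorted_wrt_rev)
  then have "sort (rev xs) = rev xs" "sort (rev xs) = rev ys"
    using assms(3) by (auto intro: properties_for_sort)
  then show ?thesis by simp
qed

lemma part2:
  assumes n: "n = 2*k+1" and k: "k \<ge> 2"
    and ls: "length ls = n" "sorted_wrt (\<ge>) ls"
    and cp: "[:1, 1:] ^ (n - k - 1) * [:3, 1:] ^ (k - 1) * [: - 2 * real k, - (4 * real k - 3), 1 :]
              = (\<Prod>a\<leftarrow>ls. [:- a, 1::real:])"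
  shows "-1 < ls ! 1 \<and> ls ! 1 < -1/2 \<and> ls ! 2 = -1 \<and> ls ! (n - 1) = -3"
proof -
  define d where "d = (4*real k - 3)^2 + 8*real k"
  define r1 where "r1 = ((4*real k - 3) + sqrt d)/2"
  define r2 where "r2 = ((4*real k - 3) - sqrt d)/2"
  have kr: "real k \<ge> 2" using k by simp
  have d0: "d \<ge> 0" unfolding d_def by simp
  have sq: "sqrt d ^ 2 = d" using d0 by simp
  have s1: "sqrt d > 4*real k - 2"
    by (rule real_less_rsqrt) (use kr in \<open>simp add: d_def power2_eq_square algebra_simps\<close>)
  have "d < (4*real k - 1)^2" using kr by (simp add: d_def power2_eq_square algebra_simps)
  then have "sqrt d < sqrt ((4*real k - 1)^2)" by (rule real_sqrt_less_mono)
  then have s2: "sqrt d < 4*real k - 1" using kr by simp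
  have r2a: "-1 < r2" "r2 < -1/2" using s1 s2 unfolding r2_def by auto
  have r1a: "r1 > 0" using s1 kr unfolding r1_def by auto
  have q: "[: - 2 * real k, - (4 * real k - 3), 1 :] = [:-r1, 1:] * [:-r2, 1:]"
  proof -
    have "r1 * r2 = - 2 * real k" unfolding r1_def r2_def using sq
      by (simp add: d_def field_simps power2_eq_square)
    moreover have "r1 + r2 = 4 * real k - 3" unfolding r1_def r2_def by (simp add: field_simps)
    ultimately show ?thesis by (simp add: algebra_simps)
  qed
  define L where "L = [r1, r2] @ replicate k (-1) @ replicate (k-1) (-3::real)"
  have PL: "(\<Prod>a\<leftarrow>L. [:- a, 1::real:]) = (\<Prod>a\<leftarrow>ls. [:- a, 1::real:])"
  proof -
    have nk: "n - k - 1 = k" using n by simp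
    have "(\<Prod>a\<leftarrow>L. [:- a, 1::real:]) = ([:-r1,1:] * ([:-r2,1:] * 1)) * ([:1,1:]^k * [:3,1:]^(k-1))"
      unfolding L_def by (simp only: map_append prod_list.append map_replicate prod_list_replicate
        list.map prod_list.Cons prod_list.Nil minus_minus mult.assoc)
    also have "\<dots> = [:1, 1:] ^ (n - k - 1) * [:3, 1:] ^ (k - 1) * [: - 2 * real k, - (4 * real k - 3), 1 :]"
      unfolding nk q by (simp only: mult.assoc mult.commute mult.left_commute mult_1_right)
    finally show ?thesis using cp by simp
  qed
  have "mset ls = mset L"
  proof (rule multiset_eqI)
    fix a show "count (mset ls) a = count (mset L) a"
      using order_prod_lin[of a ls] order_prod_lin[of a L] PL by simp
  qed
  moreover have "sorted_wrt (\<ge>) L"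
    unfolding L_def using r1a r2a by (auto simp: sorted_wrt_append sorted_wrt_repl)
  ultimately have "ls = L" using sorted_desc_unique[OF ls(2)] by simp
  then show ?thesis using r2a k n by (simp add: L_def nth_append)
qed


theorem corollary2p9:
  fixes k n :: nat
  assumes "k \<ge> 2" and "n = 2*k + 1"
  shows "char_poly (distance_matrix (friendship_adj k) n) =
           [:1, 1:] ^ (n - k - 1) * [:3, 1:] ^ (k - 1) *
           [: - 2 * real k, - (4 * real k - 3), 1 :]
    \<and> (\<forall>ls :: real list. length ls = n \<and> sorted_wrt (\<ge>) ls \<and>
          char_poly (distance_matrix (friendship_adj k) n) = (\<Prod>a\<leftarrow>ls. [:- a, 1:]) \<longrightarrow>
          -1 < ls ! 1 \<and> ls ! 1 < -1/2 \<and> ls ! 2 = -1 \<and> ls ! (n - 1) = -3)"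
proof -
  have k1: "k \<ge> 1" using assms(1) by simp
  have P: "char_poly (distance_matrix (friendship_adj k) n) =
           [:1, 1:] ^ (n - k - 1) * [:3, 1:] ^ (k - 1) *
           [: - 2 * real k, - (4 * real k - 3), 1 :]" by (rule part1[OF assms(2) k1])
  show ?thesis
  proof (rule conjI[OF P], intro allI impI)
    fix ls :: "real list"
    assume a: "length ls = n \<and> sorted_wrt (\<ge>) ls \<and>
          char_poly (distance_matrix (friendship_adj k) n) = (\<Prod>a\<leftarrow>ls. [:- a, 1:])"
    show "-1 < ls ! 1 \<and> ls ! 1 < -1/2 \<and> ls ! 2 = -1 \<and> ls ! (n - 1) = -3"
      by (rule part2[OF assms(2) assms(1)]) (use a P in auto)
  qed
qed

end
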